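(* There is an absolute constant $C$ such that the following holds. Let $(\mathcal T,\{B_i\})$ be a tree decomposition of a graph $G$, rooted at $r$, such that every node has level at most $d$, and let $\lambda\in\{1,\dots,d\}$. Define new bags $B'_v := \bigcup_{w\in \mathcal T_{v\leftrightarrow\sigma(v)}} B_w$ for $v\neq r$ and $B'_r:=B_r$. Then $(\mathcal T,\{B'_v\})$ has combinatorial diameter at most $C\cdot d/\lambda$.
   Context: Tree decomposition: tree with bags covering vertices and edges of $G$, each vertex's bags forming a connected subtree. $\mathcal T_{x\leftrightarrow y}$ is the set of nodes on the unique $x$–$y$ path in $\mathcal T$. The level $\ell(v)$ of a node is the number of edges on $\mathcal T_{v\leftrightarrow r}$. A node is a synchronization node if its level is a multiple of $\lambda$. For $v\neq r$, the synchronization ancestor $\sigma(v)$ is the first synchronization node on the path from $v$ to $r$, excluding $v$ itself. Combinatorial diameter: for nodes $s,t$ consider the path $\mathcal T_{s\leftrightarrow t}$. A non-endpoint node $v$ of the current path, with its two neighbours on the current path labelled $u,w$ (in some order), is redundant if $B_v\cap B_w\subseteq B_u$; bypassing $v$ deletes $v$ and joins $u,w$. The path has combinatorial length at most $\ell$ if repeatedly bypassing redundant nodes (redundancy evaluated in the current path) yields a path with at most $\ell$ edges. The combinatorial diameter is the minimum $\delta$ such that every path $\mathcal T_{u\leftrightarrow v}$ has combinatorial length at most $\delta$ (with respect to the given bags). *)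

theory Defs
  imports Complex_Main
begin

definition is_tpath :: "('n \<Rightarrow> 'n \<Rightarrow> bool) \<Rightarrow> 'n set \<Rightarrow> 'n list \<Rightarrow> 'n \<Rightarrow> 'n \<Rightarrow> bool" where
  "is_tpath TE N p u v \<longleftrightarrow> p \<noteq> [] \<and> hd p = u \<and> last p = v \<and> distinct p \<and> set p \<subseteq> N
     \<and> (\<forall>i. Suc i < length p \<longrightarrow> TE (p ! i) (p ! Suc i))"

definition is_tree :: "'n set \<Rightarrow> ('n \<Rightarrow> 'n \<Rightarrow> bool) \<Rightarrow> bool" where
  "is_tree N TE \<longleftrightarrow> finite N \<and> N \<noteq> {}
     \<and> (\<forall>x y. TE x y \<longrightarrow> x \<in> N \<and> y \<in> N \<and> TE y x \<and> x \<noteq> y)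
     \<and> (\<forall>u\<in>N. \<forall>v\<in>N. \<exists>!p. is_tpath TE N p u v)"

definition tpath :: "'n set \<Rightarrow> ('n \<Rightarrow> 'n \<Rightarrow> bool) \<Rightarrow> 'n \<Rightarrow> 'n \<Rightarrow> 'n list" where
  "tpath N TE u v = (THE p. is_tpath TE N p u v)"

definition is_tree_decomp ::
  "'v set \<Rightarrow> ('v \<times> 'v) set \<Rightarrow> 'n set \<Rightarrow> ('n \<Rightarrow> 'n \<Rightarrow> bool) \<Rightarrow> ('n \<Rightarrow> 'v set) \<Rightarrow> bool" where
  "is_tree_decomp V E N TE B \<longleftrightarrow> is_tree N TE
     \<and> (\<forall>t\<in>N. B t \<subseteq> V)
     \<and> (\<forall>x\<in>V. \<exists>t\<in>N. x \<in> B t)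
     \<and> (\<forall>(x,y)\<in>E. \<exists>t\<in>N. x \<in> B t \<and> y \<in> B t)
     \<and> (\<forall>x t1 t2. t1 \<in> N \<longrightarrow> t2 \<in> N \<longrightarrow> x \<in> B t1 \<longrightarrow> x \<in> B t2
          \<longrightarrow> (\<forall>w\<in>set (tpath N TE t1 t2). x \<in> B w))"

definition level :: "'n set \<Rightarrow> ('n \<Rightarrow> 'n \<Rightarrow> bool) \<Rightarrow> 'n \<Rightarrow> 'n \<Rightarrow> nat" where
  "level N TE r v = length (tpath N TE v r) - 1"

definition sync_node :: "'n set \<Rightarrow> ('n \<Rightarrow> 'n \<Rightarrow> bool) \<Rightarrow> 'n \<Rightarrow> nat \<Rightarrow> 'n \<Rightarrow> bool" where
  "sync_node N TE r lam v \<longleftrightarrow> lam dvd level N TE r v"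

definition sync_anc :: "'n set \<Rightarrow> ('n \<Rightarrow> 'n \<Rightarrow> bool) \<Rightarrow> 'n \<Rightarrow> nat \<Rightarrow> 'n \<Rightarrow> 'n" where
  "sync_anc N TE r lam v = hd (filter (sync_node N TE r lam) (tl (tpath N TE v r)))"

definition new_bags :: "'n set \<Rightarrow> ('n \<Rightarrow> 'n \<Rightarrow> bool) \<Rightarrow> 'n \<Rightarrow> nat \<Rightarrow> ('n \<Rightarrow> 'v set) \<Rightarrow> 'n \<Rightarrow> 'v set" where
  "new_bags N TE r lam B v =
     (if v = r then B r else \<Union>w\<in>set (tpath N TE v (sync_anc N TE r lam v)). B w)"

definition bypass :: "('n \<Rightarrow> 'v set) \<Rightarrow> 'n list \<Rightarrow> 'n list \<Rightarrow> bool" where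
  "bypass B p q \<longleftrightarrow> (\<exists>xs a v b ys. p = xs @ [a, v, b] @ ys \<and> q = xs @ [a, b] @ ys
       \<and> (B v \<inter> B b \<subseteq> B a \<or> B v \<inter> B a \<subseteq> B b))"

definition comb_length_le :: "('n \<Rightarrow> 'v set) \<Rightarrow> 'n list \<Rightarrow> real \<Rightarrow> bool" where
  "comb_length_le B p l \<longleftrightarrow> (\<exists>q. (bypass B)\<^sup>*\<^sup>* p q \<and> real (length q - 1) \<le> l)"

definition comb_diam_le :: "'n set \<Rightarrow> ('n \<Rightarrow> 'n \<Rightarrow> bool) \<Rightarrow> ('n \<Rightarrow> 'v set) \<Rightarrow> real \<Rightarrow> bool" where
  "comb_diam_le N TE B \<delta> \<longleftrightarrow> (\<forall>u\<in>N. \<forall>v\<in>N. comb_length_le B (tpath N TE u v) \<delta>)"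

end

theory Submission
  imports Defs
begin


lemma bypass_Cons: "bypass B p q \<Longrightarrow> bypass B (u#p) (u#q)"
  unfolding bypass_def by (metis append_Cons)

lemma bypass_rtr_Cons: "(bypass B)\<^sup>*\<^sup>* p q \<Longrightarrow> (bypass B)\<^sup>*\<^sup>* (u#p) (u#q)"
  by (induction rule: rtranclp_induct) (auto intro: rtranclp.rtrancl_into_rtrancl bypass_Cons)

lemma bypass_rev: "bypass B p q \<Longrightarrow> bypass B (rev p) (rev q)"
  unfolding bypass_def
proof (elim exE conjE)
  fix xs a v b ys assume h: "p = xs @ [a, v, b] @ ys" "q = xs @ [a, b] @ ys"
    "B v \<inter> B b \<subseteq> B a \<or> B v \<inter> B a \<subseteq> B b"
  show "\<exists>xs a v b ys. rev p = xs @ [a, v, b] @ ys \<and> rev q = xs @ [a, b] @ ys \<and> (B v \<inter> B b \<subseteq> B a \<or> B v \<inter> B a \<subseteq> B b)"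
    by (rule exI[of _ "rev ys"], rule exI[of _ b], rule exI[of _ v], rule exI[of _ a], rule exI[of _ "rev xs"])
       (use h in auto)
qed

lemma bypass_rtr_rev: "(bypass B)\<^sup>*\<^sup>* p q \<Longrightarrow> (bypass B)\<^sup>*\<^sup>* (rev p) (rev q)"
  by (induction rule: rtranclp_induct) (auto intro: rtranclp.rtrancl_into_rtrancl bypass_rev)

lemma bypass_props: "bypass B p q \<Longrightarrow> hd q = hd p \<and> length q \<ge> 2 \<and> length p = Suc (length q)"
  unfolding bypass_def
proof (elim exE conjE)
  fix xs a v b ys assume "p = xs @ [a, v, b] @ ys" "q = xs @ [a, b] @ ys"
  then show ?thesis by (cases xs) auto
qed

lemma bypass_rtr_props: "(bypass B)\<^sup>*\<^sup>* p q \<Longrightarrow> (p \<noteq> [] \<longrightarrow> hd q = hd p) \<and> (length p \<ge> 2 \<longrightarrow> length q \<ge> 2) \<and> (p = [] \<longrightarrow> q = [])"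
proof (induction rule: rtranclp_induct)
  case base then show ?case by auto
next
  case (step y z)
  from bypass_props[OF step(2)] step(3) show ?case by auto
qed

lemma finite_lv: "finite {j::nat. j < n \<and> P j}"
  by (rule finite_subset[of _ "{..<n}"]) auto

lemma card_lv_Suc: "P n \<Longrightarrow> card {j::nat. j < Suc n \<and> P j} = Suc (card {j. j < n \<and> P j})"
proof -
  assume "P n"
  then have "{j::nat. j < Suc n \<and> P j} = insert n {j. j < n \<and> P j}" by auto
  then show ?thesis using finite_lv by simp
qed

lemma card_lv_mono: "n \<le> m \<Longrightarrow> card {j::nat. j < n \<and> P j} \<le> card {j. j < m \<and> P j}"
  by (rule card_mono[OF finite_lv]) auto

lemma chain_lemma:
  fixes par :: "'n \<Rightarrow> 'n \<Rightarrow> bool" and lev :: "'n \<Rightarrow> nat" and Bn :: "'n \<Rightarrow> 'v set"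
  assumes hlev: "\<And>c x. par c x \<Longrightarrow> lev c = Suc (lev x)"
    and hB: "\<And>c x. par c x \<Longrightarrow> \<not> lam dvd lev x \<Longrightarrow> Bn x \<subseteq> Bn c"
  shows "successively par p \<Longrightarrow> \<exists>q. (bypass Bn)\<^sup>*\<^sup>* p q \<and> length q \<le> 2 + card {j. j < lev (hd p) \<and> lam dvd j}"
proof (induction p rule: induct_list012)
  case 1 then show ?case by auto
next
  case (2 x) then show ?case by auto
next
  case (3 x y zs)
  have pxy: "par x y" and sy: "successively par (y # zs)" using 3(3) by auto
  obtain q' where q': "(bypass Bn)\<^sup>*\<^sup>* (y # zs) q'" "length q' \<le> 2 + card {j. j < lev y \<and> lam dvd j}"
    using 3(2)[OF sy] by auto
  have lx: "lev x = Suc (lev y)" using hlev[OF pxy] .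
  have r1: "(bypass Bn)\<^sup>*\<^sup>* (x # y # zs) (x # q')" using bypass_rtr_Cons[OF q'(1)] .
  show ?case
  proof (cases "lam dvd lev y")
    case True
    have "length (x # q') \<le> 2 + card {j. j < lev x \<and> lam dvd j}"
    proof -
      have "card {j. j < lev x \<and> lam dvd j} = Suc (card {j. j < lev y \<and> lam dvd j})"
        by (subst lx) (rule card_lv_Suc[of "\<lambda>j. lam dvd j", OF True])
      then show ?thesis using q'(2) by simp
    qed
    then show ?thesis using r1 by (unfold list.sel) blast
  next
    case False
    have cm: "card {j. j < lev y \<and> lam dvd j} \<le> card {j. j < lev x \<and> lam dvd j}"
      by (rule card_lv_mono) (simp add: lx)
    show ?thesis
    proof (cases zs)
      case Nil
      have "length [x,y] \<le> 2 + card {j. j < lev x \<and> lam dvd j}" by simp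
      moreover have "(bypass Bn)\<^sup>*\<^sup>* (x # y # zs) [x,y]" using Nil by simp
      ultimately show ?thesis by (unfold list.sel) blast
    next
      case (Cons z w)
      have pr: "hd q' = y" "length q' \<ge> 2" using bypass_rtr_props[OF q'(1)] Cons by auto
      then obtain z' w' where qq: "q' = y # z' # w'"
        proof -
          have "\<exists>z' w'. q' = y # z' # w'" using pr by (cases q'; cases "tl q'") auto
          then show ?thesis using that by blast
        qed
      have "bypass Bn (x # q') (x # z' # w')"
        unfolding bypass_def qq using hB[OF pxy False]
        by (intro exI[of _ "[]"] exI[of _ x] exI[of _ y] exI[of _ z'] exI[of _ w']) auto
      then have "(bypass Bn)\<^sup>*\<^sup>* (x # y # zs) (x # z' # w')" using r1 qq
        by (metis rtranclp.rtrancl_into_rtrancl)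
      moreover have "length (x # z' # w') \<le> 2 + card {j. j < lev x \<and> lam dvd j}"
        using q'(2) qq cm by simp
      ultimately show ?thesis by (unfold list.sel) blast
    qed
  qed
qed


lemma down_lemma:
  assumes hfun: "\<And>c x y. par c x \<Longrightarrow> par c y \<Longrightarrow> x = y"
  shows "distinct (u # v # rest) \<Longrightarrow> par v u \<Longrightarrow> successively (\<lambda>x y. par x y \<or> par y x) (u # v # rest)
     \<Longrightarrow> successively (\<lambda>x y. par y x) (u # v # rest)"
proof (induction rest arbitrary: u v)
  case Nil then show ?case by simp
next
  case (Cons w rest)
  have "par v w \<or> par w v" using Cons.prems(3) by simp
  moreover have "\<not> par v w" using hfun[OF Cons.prems(2)] Cons.prems(1) by auto
  ultimately have pwv: "par w v" by auto
  have "successively (\<lambda>x y. par y x) (v # w # rest)"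
    using Cons.IH[of v w] Cons.prems pwv by simp
  then show ?case using Cons.prems(2) by simp
qed

lemma G_lemma:
  fixes par :: "'n \<Rightarrow> 'n \<Rightarrow> bool" and lev :: "'n \<Rightarrow> nat" and Bn :: "'n \<Rightarrow> 'v set"
  assumes hlev: "\<And>c x. par c x \<Longrightarrow> lev c = Suc (lev x)"
    and hB: "\<And>c x. par c x \<Longrightarrow> \<not> lam dvd lev x \<Longrightarrow> Bn x \<subseteq> Bn c"
    and hfun: "\<And>c x y. par c x \<Longrightarrow> par c y \<Longrightarrow> x = y"
  shows "distinct p \<Longrightarrow> successively (\<lambda>x y. par x y \<or> par y x) p \<Longrightarrow> \<forall>x\<in>set p. lev x \<le> d \<Longrightarrow>
    \<exists>q. (bypass Bn)\<^sup>*\<^sup>* p q \<and> length q \<le> 2 + card {j. j < lev (hd p) \<and> lam dvd j} + card {j. j < Suc d \<and> lam dvd j}"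
proof (induction p rule: induct_list012)
  case 1 then show ?case by auto
next
  case (2 x) then show ?case by auto
next
  case (3 x y zs)
  show ?case
  proof (cases "par x y")
    case False
    then have pyx: "par y x" using 3(4) by simp
    have "successively (\<lambda>x y. par y x) (x # y # zs)"
      apply (rule down_lemma[of par])
      using hfun 3(3) pyx 3(4) by blast+
    then have sr: "successively par (rev (x # y # zs))" by (simp only: successively_rev)
    obtain q2 where q2: "(bypass Bn)\<^sup>*\<^sup>* (rev (x # y # zs)) q2"
      "length q2 \<le> 2 + card {j. j < lev (hd (rev (x # y # zs))) \<and> lam dvd j}"
    proof -
      have "\<exists>q. (bypass Bn)\<^sup>*\<^sup>* (rev (x # y # zs)) q \<and> length q \<le> 2 + card {j. j < lev (hd (rev (x # y # zs))) \<and> lam dvd j}"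
        apply (rule chain_lemma[where par=par and lev=lev and lam=lam and Bn=Bn])
        using hlev hB sr by blast+
      then show ?thesis using that by blast
    qed
    have "hd (rev (x # y # zs)) \<in> set (x # y # zs)" by (metis hd_in_set rev_is_Nil_conv set_rev list.distinct(1))
    then have "lev (hd (rev (x # y # zs))) \<le> Suc d" using 3(5) by (metis le_SucI)
    then have "card {j. j < lev (hd (rev (x # y # zs))) \<and> lam dvd j} \<le> card {j. j < Suc d \<and> lam dvd j}"
      by (rule card_lv_mono)
    moreover have "(bypass Bn)\<^sup>*\<^sup>* (x # y # zs) (rev q2)" using bypass_rtr_rev[OF q2(1)] by simp
    moreover have "length (rev q2) \<le> 2 + card {j. j < lev (hd (x # y # zs)) \<and> lam dvd j} + card {j. j < Suc d \<and> lam dvd j}"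
      using q2(2) calculation(1) by simp
    ultimately show ?thesis by blast
  next
    case pxy: True
    have sy: "successively (\<lambda>x y. par x y \<or> par y x) (y # zs)" using 3(4) by simp
    obtain q' where q': "(bypass Bn)\<^sup>*\<^sup>* (y # zs) q'"
      "length q' \<le> 2 + card {j. j < lev y \<and> lam dvd j} + card {j. j < Suc d \<and> lam dvd j}"
    proof -
      have "distinct (y # zs)" using 3(3) by simp
      moreover have "\<forall>x\<in>set (y # zs). lev x \<le> d" using 3(5) by simp
      ultimately obtain q where "(bypass Bn)\<^sup>*\<^sup>* (y # zs) q"
      "length q \<le> 2 + card {j. j < lev (hd (y # zs)) \<and> lam dvd j} + card {j. j < Suc d \<and> lam dvd j}"
        using 3(2)[OF _ sy] by blast
      then show ?thesis using that by simp
    qed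
    have lx: "lev x = Suc (lev y)" using hlev[OF pxy] .
    have r1: "(bypass Bn)\<^sup>*\<^sup>* (x # y # zs) (x # q')" using bypass_rtr_Cons[OF q'(1)] .
    show ?thesis
    proof (cases "lam dvd lev y")
      case True
      have "length (x # q') \<le> 2 + card {j. j < lev x \<and> lam dvd j} + card {j. j < Suc d \<and> lam dvd j}"
      proof -
        have "card {j. j < lev x \<and> lam dvd j} = Suc (card {j. j < lev y \<and> lam dvd j})"
          by (subst lx) (rule card_lv_Suc[of "\<lambda>j. lam dvd j", OF True])
        then show ?thesis using q'(2) by simp
      qed
      then show ?thesis using r1 by (unfold list.sel) blast
    next
      case False
      have cm: "card {j. j < lev y \<and> lam dvd j} \<le> card {j. j < lev x \<and> lam dvd j}"
        by (rule card_lv_mono) (simp add: lx)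
      show ?thesis
      proof (cases zs)
        case Nil
        have "length [x,y] \<le> 2 + card {j. j < lev x \<and> lam dvd j} + card {j. j < Suc d \<and> lam dvd j}" by simp
        moreover have "(bypass Bn)\<^sup>*\<^sup>* (x # y # zs) [x,y]" using Nil by simp
        ultimately show ?thesis by (unfold list.sel) blast
      next
        case (Cons z w)
        have pr: "hd q' = y" "length q' \<ge> 2" using bypass_rtr_props[OF q'(1)] Cons by auto
        then obtain z' w' where qq: "q' = y # z' # w'"
          proof -
          have "\<exists>z' w'. q' = y # z' # w'" using pr by (cases q'; cases "tl q'") auto
          then show ?thesis using that by blast
        qed
        have "bypass Bn (x # q') (x # z' # w')"
          unfolding bypass_def qq using hB[OF pxy False]
          by (intro exI[of _ "[]"] exI[of _ x] exI[of _ y] exI[of _ z'] exI[of _ w']) auto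
        then have "(bypass Bn)\<^sup>*\<^sup>* (x # y # zs) (x # z' # w')" using r1 qq
          by (metis rtranclp.rtrancl_into_rtrancl)
        moreover have "length (x # z' # w') \<le> 2 + card {j. j < lev x \<and> lam dvd j} + card {j. j < Suc d \<and> lam dvd j}"
          using q'(2) qq cm by simp
        ultimately show ?thesis by (unfold list.sel) blast
      qed
    qed
  qed
qed



lemma tree_adj0: "is_tree N TE \<Longrightarrow> (\<forall>x y. TE x y \<longrightarrow> x \<in> N \<and> y \<in> N \<and> TE y x \<and> x \<noteq> y)"
  unfolding is_tree_def by (elim conjE)

lemma tree_uniq0: "is_tree N TE \<Longrightarrow> (\<forall>u\<in>N. \<forall>v\<in>N. \<exists>!p. is_tpath TE N p u v)"
  unfolding is_tree_def by (elim conjE)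

lemma tree_adj: "is_tree N TE \<Longrightarrow> TE x y \<Longrightarrow> x \<in> N \<and> y \<in> N \<and> TE y x \<and> x \<noteq> y"
  using tree_adj0 by metis

lemma tp_is: "is_tree N TE \<Longrightarrow> u \<in> N \<Longrightarrow> v \<in> N \<Longrightarrow> is_tpath TE N (tpath N TE u v) u v"
  unfolding tpath_def by (rule theI') (use tree_uniq0 in blast)

lemma tp_eq: "is_tree N TE \<Longrightarrow> u \<in> N \<Longrightarrow> v \<in> N \<Longrightarrow> is_tpath TE N p u v \<Longrightarrow> tpath N TE u v = p"
  unfolding tpath_def by (rule the1_equality) (use tree_uniq0 in blast)+

lemma tp_prefix:
  assumes "is_tpath TE N (xs @ s # ys) u v"
  shows "is_tpath TE N (xs @ [s]) u s"
proof -
  let ?P = "xs @ s # ys"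
  have Q: "xs @ [s] = take (Suc (length xs)) ?P" by simp
  have "hd (xs @ [s]) = hd ?P" by (cases xs) auto
  moreover have "distinct (xs @ [s])" using assms unfolding is_tpath_def by auto
  moreover have "set (xs @ [s]) \<subseteq> N" using assms unfolding is_tpath_def by auto
  moreover have "\<forall>i. Suc i < length (xs @ [s]) \<longrightarrow> TE ((xs @ [s]) ! i) ((xs @ [s]) ! Suc i)"
  proof (intro allI impI)
    fix i assume i: "Suc i < length (xs @ [s])"
    have "TE (?P ! i) (?P ! Suc i)" using assms i unfolding is_tpath_def by auto
    moreover have "\<forall>k \<le> length xs. (xs @ [s]) ! k = ?P ! k" by (auto simp: nth_append)
    ultimately show "TE ((xs @ [s]) ! i) ((xs @ [s]) ! Suc i)" using i by simp
  qed
  ultimately show ?thesis using assms unfolding is_tpath_def by simp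
qed

lemma tp_suffix:
  assumes "is_tpath TE N (xs @ ys) u v" "ys \<noteq> []"
  shows "is_tpath TE N ys (hd ys) v"
proof -
  have "\<forall>i. Suc i < length ys \<longrightarrow> TE (ys ! i) (ys ! Suc i)"
  proof (intro allI impI)
    fix i assume i: "Suc i < length ys"
    have all: "\<forall>i. Suc i < length (xs @ ys) \<longrightarrow> TE ((xs @ ys) ! i) ((xs @ ys) ! Suc i)"
      using assms unfolding is_tpath_def by blast
    show "TE (ys ! i) (ys ! Suc i)"
      using all[rule_format, of "length xs + i"] i by (simp add: nth_append)
  qed
  then show ?thesis using assms unfolding is_tpath_def by auto
qed

definition par :: "'n set \<Rightarrow> ('n \<Rightarrow> 'n \<Rightarrow> bool) \<Rightarrow> 'n \<Rightarrow> 'n \<Rightarrow> 'n \<Rightarrow> bool" where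
  "par N TE r c x \<longleftrightarrow> c \<in> N \<and> x \<in> N \<and> tpath N TE c r = c # tpath N TE x r"

lemma tp_rr: "is_tree N TE \<Longrightarrow> r \<in> N \<Longrightarrow> tpath N TE r r = [r]"
  by (rule tp_eq) (auto simp: is_tpath_def)

lemma par_adj:
  assumes T: "is_tree N TE" and r: "r \<in> N" and ab: "TE a b"
  shows "par N TE r a b \<or> par N TE r b a"
proof -
  have a: "a \<in> N" and b: "b \<in> N" and ba: "TE b a" and ne: "a \<noteq> b" using tree_adj[OF T ab] by auto
  let ?P = "tpath N TE b r"
  have P: "is_tpath TE N ?P b r" using tp_is[OF T b r] .
  show ?thesis
  proof (cases "a \<in> set ?P")
    case False
    have "is_tpath TE N (a # ?P) a r"
      unfolding is_tpath_def
    proof (intro conjI allI impI)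
      show "a # ?P \<noteq> []" by simp
      show "hd (a # ?P) = a" by simp
      show "last (a # ?P) = r" using P unfolding is_tpath_def by simp
      show "distinct (a # ?P)" using P False unfolding is_tpath_def by simp
      show "set (a # ?P) \<subseteq> N" using P a unfolding is_tpath_def by simp
      fix i assume i: "Suc i < length (a # ?P)"
      show "TE ((a # ?P) ! i) ((a # ?P) ! Suc i)"
      proof (cases i)
        case 0
        have "?P ! 0 = b" using P unfolding is_tpath_def by (metis hd_conv_nth)
        then show ?thesis using 0 ab by simp
      next
        case (Suc k)
        then show ?thesis using P i unfolding is_tpath_def by simp
      qed
    qed
    then have "tpath N TE a r = a # ?P" by (rule tp_eq[OF T a r])
    then show ?thesis unfolding par_def using a b by simp
  next
    case True
    then obtain xs ys where Pd: "?P = xs @ a # ys" by (meson split_list)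
    have "is_tpath TE N (xs @ [a]) b a" using tp_prefix[of TE N xs a ys b r] P Pd by simp
    moreover have "is_tpath TE N [b, a] b a" using ba a b ne unfolding is_tpath_def
      by (auto simp: nth_Cons split: nat.splits)
    ultimately have "xs @ [a] = [b, a]" using tp_eq[OF T b a, of "xs @ [a]"] tp_eq[OF T b a, of "[b, a]"] by simp
    then have xs: "xs = [b]" by simp
    have "is_tpath TE N (a # ys) a r" using tp_suffix[of TE N "[b]" "a # ys" b r] P Pd xs by simp
    then have "tpath N TE a r = a # ys" by (rule tp_eq[OF T a r])
    then have "?P = b # tpath N TE a r" using Pd xs by simp
    then show ?thesis unfolding par_def using a b by simp
  qed
qed

lemma tp_hd: "is_tree N TE \<Longrightarrow> x \<in> N \<Longrightarrow> r \<in> N \<Longrightarrow> hd (tpath N TE x r) = x \<and> tpath N TE x r \<noteq> []"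
proof -
  assume "is_tree N TE" "x \<in> N" "r \<in> N"
  from tp_is[OF this] show ?thesis unfolding is_tpath_def by blast
qed

lemma par_fun:
  assumes T: "is_tree N TE" and r: "r \<in> N"
  shows "par N TE r c x \<Longrightarrow> par N TE r c y \<Longrightarrow> x = y"
proof -
  assume h: "par N TE r c x" "par N TE r c y"
  then have e: "tpath N TE x r = tpath N TE y r" and xy: "x \<in> N" "y \<in> N" unfolding par_def by auto
  have "x = hd (tpath N TE x r)" using tp_hd[OF T xy(1) r] by simp
  also have "\<dots> = hd (tpath N TE y r)" using e by simp
  also have "\<dots> = y" using tp_hd[OF T xy(2) r] by simp
  finally show "x = y" .
qed

lemma par_lev:
  assumes T: "is_tree N TE" and r: "r \<in> N"
  shows "par N TE r c x \<Longrightarrow> level N TE r c = Suc (level N TE r x)"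
proof -
  assume h: "par N TE r c x"
  then have x: "x \<in> N" and e: "tpath N TE c r = c # tpath N TE x r" unfolding par_def by auto
  have "tpath N TE x r \<noteq> []" using tp_hd[OF T x r] by simp
  then show ?thesis unfolding level_def e by simp
qed



lemma level_r: "is_tree N TE \<Longrightarrow> r \<in> N \<Longrightarrow> level N TE r r = 0"
proof -
  assume "is_tree N TE" "r \<in> N"
  then show ?thesis unfolding level_def tp_rr[OF \<open>is_tree N TE\<close> \<open>r \<in> N\<close>] by simp
qed

lemma par_bags:
  assumes T: "is_tree N TE" and r: "r \<in> N"
  shows "par N TE r c x \<Longrightarrow> \<not> lam dvd level N TE r x \<Longrightarrow> new_bags N TE r lam B x \<subseteq> new_bags N TE r lam B c"
proof -
  assume h: "par N TE r c x" and ns: "\<not> lam dvd level N TE r x"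
  then have c: "c \<in> N" and x: "x \<in> N" and e: "tpath N TE c r = c # tpath N TE x r" unfolding par_def by auto
  let ?S = "sync_node N TE r lam"
  let ?Px = "tpath N TE x r"
  have Sr: "?S r" unfolding sync_node_def using level_r[OF T r] by simp
  have xr: "x \<noteq> r" using ns level_r[OF T r] by auto
  have cr: "c \<noteq> r"
  proof
    assume "c = r"
    then have "[r] = r # ?Px" using e tp_rr[OF T r] by simp
    then show False using tp_hd[OF T x r] by simp
  qed
  have Px: "is_tpath TE N ?Px x r" using tp_is[OF T x r] .
  have Pxd: "?Px = x # tl ?Px" using tp_hd[OF T x r] by (metis list.collapse)
  have Sx: "\<not> ?S x" using ns unfolding sync_node_def .
  have tlne: "tl ?Px \<noteq> []"
  proof
    assume "tl ?Px = []"
    then have "?Px = [x]" using Pxd by simp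
    then show False using Px xr unfolding is_tpath_def by simp
  qed
  have "last (tl ?Px) = r" using Px tlne Pxd unfolding is_tpath_def by (metis last_ConsR)
  then have "r \<in> set (tl ?Px)" using tlne by (metis last_in_set)
  then have fne: "filter ?S (tl ?Px) \<noteq> []" using Sr by (metis (mono_tags, lifting) filter_empty_conv)
  define \<sigma> where "\<sigma> = hd (filter ?S (tl ?Px))"
  have sx: "sync_anc N TE r lam x = \<sigma>" unfolding sync_anc_def \<sigma>_def by simp
  have sc: "sync_anc N TE r lam c = \<sigma>" unfolding sync_anc_def \<sigma>_def e
    using Sx by (subst Pxd) simp
  have "\<sigma> \<in> set (tl ?Px)" unfolding \<sigma>_def using hd_in_set[OF fne] by simp
  then obtain as bs where tld: "tl ?Px = as @ \<sigma> # bs" by (meson split_list)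
  have Pxs: "?Px = x # as @ \<sigma> # bs" using Pxd tld by simp
  have sN: "\<sigma> \<in> N" using Px Pxs unfolding is_tpath_def by auto
  have p1: "is_tpath TE N ((x # as) @ [\<sigma>]) x \<sigma>" using tp_prefix[of TE N "x # as" \<sigma> bs x r] Px Pxs by simp
  have tx: "tpath N TE x \<sigma> = x # as @ [\<sigma>]" using tp_eq[OF T x sN p1] by simp
  have Pc: "is_tpath TE N (tpath N TE c r) c r" using tp_is[OF T c r] .
  have p2: "is_tpath TE N ((c # x # as) @ [\<sigma>]) c \<sigma>" using tp_prefix[of TE N "c # x # as" \<sigma> bs c r] Pc e Pxs by simp
  have tc: "tpath N TE c \<sigma> = c # x # as @ [\<sigma>]" using tp_eq[OF T c sN p2] by simp
  show ?thesis unfolding new_bags_def using xr cr sx sc tx tc by auto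
qed

lemma card_dvd_bound: "1 \<le> (lam::nat) \<Longrightarrow> card {j. j < Suc d \<and> lam dvd j} \<le> Suc (d div lam)"
proof -
  assume l: "1 \<le> lam"
  have "{j. j < Suc d \<and> lam dvd j} \<subseteq> (\<lambda>k. lam * k) ` {..d div lam}"
  proof
    fix j assume "j \<in> {j. j < Suc d \<and> lam dvd j}"
    then have j: "j \<le> d" "lam dvd j" by auto
    then have "j = lam * (j div lam)" by simp
    moreover have "j div lam \<le> d div lam" using j(1) by (rule div_le_mono)
    ultimately show "j \<in> (\<lambda>k. lam * k) ` {..d div lam}" by blast
  qed
  then have "card {j. j < Suc d \<and> lam dvd j} \<le> card ((\<lambda>k. lam * k) ` {..d div lam})"
    by (rule card_mono[rotated]) simp
  also have "\<dots> \<le> card {..d div lam}" by (rule card_image_le) simp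
  finally show ?thesis by simp
qed

theorem lemma4p1:
  "\<exists>C::real. \<forall>(V::nat set) (E::(nat \<times> nat) set) (N::nat set) TE (B::nat \<Rightarrow> nat set) r d lam.
     finite V \<and> E \<subseteq> V \<times> V \<and> is_tree_decomp V E N TE B \<and> r \<in> N
     \<and> (\<forall>v\<in>N. level N TE r v \<le> d) \<and> 1 \<le> lam \<and> lam \<le> d
     \<longrightarrow> comb_diam_le N TE (new_bags N TE r lam B) (C * real d / real lam)"
proof (rule exI[of _ 5], intro allI impI, elim conjE)
  fix V :: "nat set" and E :: "(nat \<times> nat) set" and N :: "nat set" and TE and B :: "nat \<Rightarrow> nat set"
    and r d lam
  assume td: "is_tree_decomp V E N TE B" and r: "r \<in> N" and lv: "\<forall>v\<in>N. level N TE r v \<le> d"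
    and l1: "1 \<le> lam" and ld: "lam \<le> d"
  have T: "is_tree N TE" using td unfolding is_tree_decomp_def by blast
  let ?par = "par N TE r" and ?lev = "level N TE r" and ?Bn = "new_bags N TE r lam B"
  let ?K = "card {j. j < Suc d \<and> lam dvd j}"
  show "comb_diam_le N TE ?Bn (5 * real d / real lam)"
    unfolding comb_diam_le_def
  proof (intro ballI)
    fix u v assume u: "u \<in> N" and v: "v \<in> N"
    let ?p = "tpath N TE u v"
    have P: "is_tpath TE N ?p u v" using tp_is[OF T u v] .
    have dist: "distinct ?p" using P unfolding is_tpath_def by blast
    have setp: "set ?p \<subseteq> N" using P unfolding is_tpath_def by blast
    have succ: "successively (\<lambda>x y. ?par x y \<or> ?par y x) ?p"
      unfolding successively_conv_nth
    proof (intro allI impI)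
      fix i assume "Suc i < length ?p"
      then have "TE (?p ! i) (?p ! Suc i)" using P unfolding is_tpath_def by blast
      then show "?par (?p ! i) (?p ! Suc i) \<or> ?par (?p ! Suc i) (?p ! i)" by (rule par_adj[OF T r])
    qed
    have lvp: "\<forall>x\<in>set ?p. ?lev x \<le> d" using setp lv by blast
    have "\<exists>q. (bypass ?Bn)\<^sup>*\<^sup>* ?p q \<and> length q \<le> 2 + card {j. j < ?lev (hd ?p) \<and> lam dvd j} + ?K"
      apply (rule G_lemma[where par = ?par and lev = ?lev and Bn = ?Bn])
      subgoal by (erule par_lev[OF T r])
      subgoal by (erule (1) par_bags[OF T r])
      subgoal by (erule (1) par_fun[OF T r])
      subgoal by (rule dist)
      subgoal by (rule succ)
      subgoal by (rule lvp)
      done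
    then obtain q where q: "(bypass ?Bn)\<^sup>*\<^sup>* ?p q"
      "length q \<le> 2 + card {j. j < ?lev (hd ?p) \<and> lam dvd j} + ?K" by blast
    have "hd ?p \<in> set ?p" using P unfolding is_tpath_def by (metis hd_in_set)
    then have "?lev (hd ?p) \<le> Suc d" using lvp by fastforce
    then have "card {j. j < ?lev (hd ?p) \<and> lam dvd j} \<le> ?K" by (rule card_lv_mono)
    moreover have "?K \<le> Suc (d div lam)" using card_dvd_bound[OF l1] .
    ultimately have lq: "length q - 1 \<le> 3 + 2 * (d div lam)" using q(2) by linarith
    have dl: "real (d div lam) \<le> real d / real lam" by (rule of_nat_div_le_of_nat)
    have one: "1 \<le> real d / real lam" using l1 ld by (simp add: field_simps)
    have "real (length q - 1) \<le> 3 + 2 * real (d div lam)" using lq by linarith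
    also have "\<dots> \<le> 5 * real d / real lam" using dl one by simp
    finally show "comb_length_le ?Bn ?p (5 * real d / real lam)"
      unfolding comb_length_le_def using q(1) by blast
  qed
qed


end
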